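(* Let $G$ be an $n$-resource selection game with I.D.-dependent weighting. Then $h^s_j=h^{s'}_j$ for every $j\in[n]$ and every two strong Nash equilibria $s,s'$ of $G$.
   Context: For $n,k\in\mathbb{N}$, an $n$-resource/$k$-player-type resource selection game with I.D.-dependent weighting is a triple $\bigl((f_j)_{j=1}^n;(R^i)_{i=1}^k;(f^i_j)_{i\in[k],j\in R^i}\bigr)$ where each $f_j:[0,\infty)\to\mathbb{R}$ is nondecreasing, each $R^i$ is a nonempty subset of $[n]$, and each $f^i_j:[0,1]\to[0,\infty)$ is increasing (no continuity assumed). A consumption profile is a map $s:[k]\to[0,\infty)^{[n]}$ with $s_j(i)=0$ for $j\notin R^i$ and $\sum_j s_j(i)=1$. The weighted load of resource $j$ is $\mu^s_j=\sum_{i:\,j\in R^i}f^i_j(s_j(i))$ and its cost is $h^s_j=f_j(\mu^s_j)$. $s$ is a Nash equilibrium if for every $i\in[k]$, every $\ell$ with $s_\ell(i)>0$ and every $j\in R^i$, $h^s_\ell\le h^s_j$. For a Nash equilibrium $s$ and $i\in[k]$, let $h^i=h^s_\ell$ for any $\ell$ with $s_\ell(i)>0$. A Nash equilibrium $s$ is strong if there is no consumption profile $s'\ne s$ such that for every $i\in[k]$ and every $\ell$ with $s'_\ell(i)>s_\ell(i)$, $h^{s'}_\ell<h^i$. *)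

theory Defs
  imports Complex_Main
begin

text \<open>Resources are indexed by {1..n}, player types by {1..k}.
  f j : cost function of resource j; R i : resources available to type i;
  w i j : the I.D.-dependent weighting function f^i_j.
  A profile s is a function s i j = s_j(i).\<close>

definition rs_game ::
  "nat \<Rightarrow> nat \<Rightarrow> (nat \<Rightarrow> real \<Rightarrow> real) \<Rightarrow> (nat \<Rightarrow> nat set)
    \<Rightarrow> (nat \<Rightarrow> nat \<Rightarrow> real \<Rightarrow> real) \<Rightarrow> bool" where
  "rs_game n k f R w \<longleftrightarrow>
     (\<forall>j\<in>{1..n}. mono_on {0..} (f j)) \<and>
     (\<forall>i\<in>{1..k}. R i \<noteq> {} \<and> R i \<subseteq> {1..n}) \<and>
     (\<forall>i\<in>{1..k}. \<forall>j\<in>R i. strict_mono_on {0..1} (w i j) \<and>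
                          (\<forall>x\<in>{0..1}. w i j x \<ge> 0))"

definition consumption_profile ::
  "nat \<Rightarrow> nat \<Rightarrow> (nat \<Rightarrow> nat set) \<Rightarrow> (nat \<Rightarrow> nat \<Rightarrow> real) \<Rightarrow> bool" where
  "consumption_profile n k R s \<longleftrightarrow>
     (\<forall>i\<in>{1..k}. (\<forall>j\<in>{1..n}. s i j \<ge> 0) \<and>
                  (\<forall>j\<in>{1..n}. j \<notin> R i \<longrightarrow> s i j = 0) \<and>
                  (\<Sum>j\<in>{1..n}. s i j) = 1)"

definition load ::
  "nat \<Rightarrow> (nat \<Rightarrow> nat set) \<Rightarrow> (nat \<Rightarrow> nat \<Rightarrow> real \<Rightarrow> real)
    \<Rightarrow> (nat \<Rightarrow> nat \<Rightarrow> real) \<Rightarrow> nat \<Rightarrow> real" where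
  "load k R w s j = (\<Sum>i\<in>{i\<in>{1..k}. j \<in> R i}. w i j (s i j))"

definition cost ::
  "nat \<Rightarrow> (nat \<Rightarrow> real \<Rightarrow> real) \<Rightarrow> (nat \<Rightarrow> nat set) \<Rightarrow> (nat \<Rightarrow> nat \<Rightarrow> real \<Rightarrow> real)
    \<Rightarrow> (nat \<Rightarrow> nat \<Rightarrow> real) \<Rightarrow> nat \<Rightarrow> real" where
  "cost k f R w s j = f j (load k R w s j)"

definition nash_eq ::
  "nat \<Rightarrow> nat \<Rightarrow> (nat \<Rightarrow> real \<Rightarrow> real) \<Rightarrow> (nat \<Rightarrow> nat set)
    \<Rightarrow> (nat \<Rightarrow> nat \<Rightarrow> real \<Rightarrow> real) \<Rightarrow> (nat \<Rightarrow> nat \<Rightarrow> real) \<Rightarrow> bool" where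
  "nash_eq n k f R w s \<longleftrightarrow> consumption_profile n k R s \<and>
     (\<forall>i\<in>{1..k}. \<forall>l\<in>{1..n}. s i l > 0 \<longrightarrow>
        (\<forall>j\<in>R i. cost k f R w s l \<le> cost k f R w s j))"

text \<open>h^i: the common cost of the resources used by type i (well defined at a NE).\<close>
definition type_cost ::
  "nat \<Rightarrow> nat \<Rightarrow> (nat \<Rightarrow> real \<Rightarrow> real) \<Rightarrow> (nat \<Rightarrow> nat set)
    \<Rightarrow> (nat \<Rightarrow> nat \<Rightarrow> real \<Rightarrow> real) \<Rightarrow> (nat \<Rightarrow> nat \<Rightarrow> real) \<Rightarrow> nat \<Rightarrow> real" where
  "type_cost n k f R w s i = cost k f R w s (SOME l. l \<in> {1..n} \<and> s i l > 0)"

definition strong_nash_eq ::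
  "nat \<Rightarrow> nat \<Rightarrow> (nat \<Rightarrow> real \<Rightarrow> real) \<Rightarrow> (nat \<Rightarrow> nat set)
    \<Rightarrow> (nat \<Rightarrow> nat \<Rightarrow> real \<Rightarrow> real) \<Rightarrow> (nat \<Rightarrow> nat \<Rightarrow> real) \<Rightarrow> bool" where
  "strong_nash_eq n k f R w s \<longleftrightarrow> nash_eq n k f R w s \<and>
     \<not> (\<exists>s'. consumption_profile n k R s' \<and>
            (\<exists>i\<in>{1..k}. \<exists>j\<in>{1..n}. s' i j \<noteq> s i j) \<and>
            (\<forall>i\<in>{1..k}. \<forall>l\<in>{1..n}. s' i l > s i l \<longrightarrow>
                 cost k f R w s' l < type_cost n k f R w s i))"

end

theory Submission
  imports Defs
begin

lemma cp_bounds: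
  assumes "consumption_profile n k R s" "i \<in> {1..k}" "j \<in> {1..n}"
  shows "0 \<le> s i j \<and> s i j \<le> 1"
proof -
  have nn: "\<forall>j\<in>{1..n}. s i j \<ge> 0" and sm: "(\<Sum>j\<in>{1..n}. s i j) = 1"
    using assms unfolding consumption_profile_def by auto
  have "s i j \<le> (\<Sum>j\<in>{1..n}. s i j)"
    by (rule member_le_sum) (use nn assms(3) in auto)
  then show ?thesis using nn sm assms(3) by auto
qed

lemma cp_pos:
  assumes "consumption_profile n k R s" "i \<in> {1..k}"
  shows "\<exists>l\<in>{1..n}. s i l > 0"
proof (rule ccontr)
  assume "\<not> ?thesis"
  then have "\<forall>l\<in>{1..n}. s i l \<le> 0" by auto
  then have "(\<Sum>j\<in>{1..n}. s i j) \<le> 0" by (intro sum_nonpos) auto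
  then show False using assms unfolding consumption_profile_def by auto
qed

lemma cp_R:
  assumes "consumption_profile n k R s" "i \<in> {1..k}" "l \<in> {1..n}" "s i l > 0"
  shows "l \<in> R i"
  using assms unfolding consumption_profile_def by force

lemma tc_eq:
  assumes N: "nash_eq n k f R w s" and i: "i \<in> {1..k}" and l: "l \<in> {1..n}" "s i l > 0"
  shows "type_cost n k f R w s i = cost k f R w s l"
proof -
  have C: "consumption_profile n k R s" using N unfolding nash_eq_def by auto
  define l0 where "l0 = (SOME l. l \<in> {1..n} \<and> s i l > 0)"
  have l0: "l0 \<in> {1..n} \<and> s i l0 > 0"
    unfolding l0_def by (rule someI_ex) (use cp_pos[OF C i] in auto)
  have "l \<in> R i" "l0 \<in> R i" using cp_R[OF C i] l l0 by auto
  then have "cost k f R w s l0 \<le> cost k f R w s l" "cost k f R w s l \<le> cost k f R w s l0"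
    using N i l l0 unfolding nash_eq_def by auto
  then show ?thesis unfolding type_cost_def l0_def[symmetric] by auto
qed

lemma tc_le:
  assumes N: "nash_eq n k f R w s" and i: "i \<in> {1..k}" and j: "j \<in> R i"
  shows "type_cost n k f R w s i \<le> cost k f R w s j"
proof -
  have C: "consumption_profile n k R s" using N unfolding nash_eq_def by auto
  obtain l where l: "l \<in> {1..n}" "s i l > 0" using cp_pos[OF C i] by auto
  have "cost k f R w s l \<le> cost k f R w s j" using N i l j unfolding nash_eq_def by auto
  then show ?thesis using tc_eq[OF N i l] by simp
qed

lemma load_nn:
  assumes G: "rs_game n k f R w" and C: "consumption_profile n k R s"
  shows "load k R w s j \<ge> 0"
  unfolding load_def
proof (rule sum_nonneg)
  fix i assume "i \<in> {i \<in> {1..k}. j \<in> R i}"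
  then have i: "i \<in> {1..k}" "j \<in> R i" by auto
  then have j: "j \<in> {1..n}" using G unfolding rs_game_def by blast
  have "s i j \<in> {0..1}" using cp_bounds[OF C i(1) j] by auto
  then show "w i j (s i j) \<ge> 0" using G i unfolding rs_game_def by auto
qed

lemma key:
  assumes G: "rs_game n k f R w" and S: "strong_nash_eq n k f R w s"
    and T: "nash_eq n k f R w t" and j: "j \<in> {1..n}"
    and lt: "cost k f R w t j < cost k f R w s j"
  shows False
proof -
  have NS: "nash_eq n k f R w s" using S unfolding strong_nash_eq_def by auto
  have CS: "consumption_profile n k R s" using NS unfolding nash_eq_def by auto
  have CT: "consumption_profile n k R t" using T unfolding nash_eq_def by auto
  have Rsub: "\<And>i. i \<in> {1..k} \<Longrightarrow> R i \<subseteq> {1..n}" using G unfolding rs_game_def by auto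
  have fm: "\<And>j. j \<in> {1..n} \<Longrightarrow> mono_on {0..} (f j)" using G unfolding rs_game_def by auto
  have wm: "\<And>i j. i \<in> {1..k} \<Longrightarrow> j \<in> R i \<Longrightarrow> strict_mono_on {0..1} (w i j)"
    using G unfolding rs_game_def by auto
  define M where "M = {i\<in>{1..k}. type_cost n k f R w t i < type_cost n k f R w s i}"
  define u where "u = (\<lambda>i. if i \<in> M then t i else s i)"
  have CU: "consumption_profile n k R u"
    using CS CT unfolding consumption_profile_def u_def by auto
  have loadle: "load k R w u l \<le> load k R w t l"
    if iM: "i \<in> M" and l: "l \<in> {1..n}" and tp: "t i l > 0" for i l
    unfolding load_def
  proof (rule sum_mono)
    fix i' assume "i' \<in> {i \<in> {1..k}. l \<in> R i}"
    then have i': "i' \<in> {1..k}" "l \<in> R i'" by auto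
    show "w i' l (u i' l) \<le> w i' l (t i' l)"
    proof (cases "i' \<in> M")
      case True then show ?thesis unfolding u_def by simp
    next
      case False
      have i1: "i \<in> {1..k}" using iM unfolding M_def by auto
      have s0: "s i' l = 0"
      proof (rule ccontr)
        assume "s i' l \<noteq> 0"
        then have sp: "s i' l > 0" using cp_bounds[OF CS i'(1) l] by auto
        have "type_cost n k f R w t i' \<le> cost k f R w t l" by (rule tc_le[OF T i'])
        also have "\<dots> = type_cost n k f R w t i" using tc_eq[OF T i1 l tp] by simp
        also have "\<dots> < type_cost n k f R w s i" using iM unfolding M_def by auto
        also have "\<dots> \<le> cost k f R w s l" using tc_le[OF NS i1 cp_R[OF CT i1 l tp]] .
        also have "\<dots> = type_cost n k f R w s i'" using tc_eq[OF NS i'(1) l sp] by simp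
        finally show False using False i' unfolding M_def by auto
      qed
      have "t i' l \<in> {0..1}" using cp_bounds[OF CT i'(1) l] by auto
      then have "w i' l 0 \<le> w i' l (t i' l)"
        by (intro strict_mono_on_leD[OF wm[OF i']]) auto
      then show ?thesis using False s0 unfolding u_def by simp
    qed
  qed
  have dev: "cost k f R w u l < type_cost n k f R w s i"
    if i: "i \<in> {1..k}" and l: "l \<in> {1..n}" and gt: "u i l > s i l" for i l
  proof -
    have iM: "i \<in> M" using gt unfolding u_def by (auto split: if_splits)
    have tp: "t i l > 0" using gt iM cp_bounds[OF CS i l] unfolding u_def by auto
    have "cost k f R w u l \<le> cost k f R w t l"
      unfolding cost_def
      by (rule mono_onD[OF fm[OF l]]) (use load_nn[OF G CU] load_nn[OF G CT] loadle[OF iM l tp] in auto)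
    also have "\<dots> = type_cost n k f R w t i" using tc_eq[OF T i l tp] by simp
    also have "\<dots> < type_cost n k f R w s i" using iM unfolding M_def by auto
    finally show ?thesis .
  qed
  have ll: "load k R w t j < load k R w s j"
  proof (rule ccontr)
    assume "\<not> ?thesis"
    then have "cost k f R w s j \<le> cost k f R w t j"
      unfolding cost_def
      by (intro mono_onD[OF fm[OF j]]) (use load_nn[OF G CS] load_nn[OF G CT] in auto)
    then show False using lt by simp
  qed
  obtain i where i: "i \<in> {1..k}" "j \<in> R i" and wl: "w i j (t i j) < w i j (s i j)"
  proof (rule ccontr)
    assume "\<not> thesis"
    then have "\<forall>i\<in>{i \<in> {1..k}. j \<in> R i}. w i j (s i j) \<le> w i j (t i j)"
      using that by force
    then have "load k R w s j \<le> load k R w t j" unfolding load_def by (intro sum_mono) auto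
    then show False using ll by simp
  qed
  have tl: "t i j < s i j"
  proof (rule ccontr)
    assume "\<not> ?thesis"
    then have "w i j (s i j) \<le> w i j (t i j)"
      by (intro strict_mono_on_leD[OF wm[OF i]]) (use cp_bounds[OF CS i(1) j] cp_bounds[OF CT i(1) j] in auto)
    then show False using wl by simp
  qed
  have sp: "s i j > 0" using tl cp_bounds[OF CT i(1) j] by auto
  have "type_cost n k f R w t i \<le> cost k f R w t j" by (rule tc_le[OF T i])
  also have "\<dots> < cost k f R w s j" by (rule lt)
  also have "\<dots> = type_cost n k f R w s i" using tc_eq[OF NS i(1) j sp] by simp
  finally have iM: "i \<in> M" using i unfolding M_def by auto
  have "u i j \<noteq> s i j" using iM tl unfolding u_def by simp
  then have "consumption_profile n k R u \<and> (\<exists>i\<in>{1..k}. \<exists>j\<in>{1..n}. u i j \<noteq> s i j) \<and>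
            (\<forall>i\<in>{1..k}. \<forall>l\<in>{1..n}. u i l > s i l \<longrightarrow>
                 cost k f R w u l < type_cost n k f R w s i)"
    using CU dev i(1) j by blast
  then show False using S unfolding strong_nash_eq_def by blast
qed

theorem mainTheorem6:
  fixes n k :: nat and f :: "nat \<Rightarrow> real \<Rightarrow> real" and R :: "nat \<Rightarrow> nat set"
    and w :: "nat \<Rightarrow> nat \<Rightarrow> real \<Rightarrow> real" and s s' :: "nat \<Rightarrow> nat \<Rightarrow> real"
  assumes "rs_game n k f R w"
    and "strong_nash_eq n k f R w s"
    and "strong_nash_eq n k f R w s'"
  shows "\<forall>j\<in>{1..n}. cost k f R w s j = cost k f R w s' j"
proof
  fix j assume j: "j \<in> {1..n}"
  have N: "nash_eq n k f R w s" "nash_eq n k f R w s'"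
    using assms unfolding strong_nash_eq_def by auto
  have "\<not> cost k f R w s' j < cost k f R w s j" using key[OF assms(1) assms(2) N(2) j] by auto
  moreover have "\<not> cost k f R w s j < cost k f R w s' j" using key[OF assms(1) assms(3) N(1) j] by auto
  ultimately show "cost k f R w s j = cost k f R w s' j" by simp
qed

end
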